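(* Let $X\subset\mathbb{R}^n$ be a closed set which is the closure of its interior, $f:X\to\mathbb{R}^n$ locally Lipschitz, and suppose $\dot x=f(x)$ is forward complete with flow $\varphi_t$. Let $K$ be a closed convex cone with nonempty interior and suppose the system is strongly monotone in reversed time: for every $\xi_1,\xi_2\in X$ and every $t<0$ such that $\varphi_t(\xi_1),\varphi_t(\xi_2)$ are defined, $\xi_1\succ\xi_2$ implies $\varphi_t(\xi_1)\gg\varphi_t(\xi_2)$. Let $v\in\operatorname{int}(K)$, $|v|=1$, with $X$ invariant under translation by $v$ and $\varphi_t(\xi+\lambda v)=\varphi_t(\xi)+\lambda v$ for all $\lambda\in\mathbb{R}$, $\xi\in X$ and all $t$ at which $\varphi_t(\xi)$ is defined. Let $V(x)=\inf\{\alpha\in\mathbb{R}:x\preceq\alpha v\}$. Then for all $\xi_1,\xi_2\in X$ and all $t>0$, $$V(\varphi_t(\xi_1)-\varphi_t(\xi_2))\ge V(\xi_1-\xi_2),$$ and the inequality is strict whenever $\xi_1-\xi_2\notin\operatorname{span}\{v\}$.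
   Context: The cone $K$ satisfies $K+K\subset K$, $\alpha K\subset K$ for $\alpha\ge0$, $K\cap(-K)=\{0\}$. $\xi_1\succeq\xi_2$ iff $\xi_1-\xi_2\in K$; $\xi_1\succ\xi_2$ iff additionally $\xi_1\neq\xi_2$; $\xi_1\gg\xi_2$ iff $\xi_1-\xi_2\in\operatorname{int}(K)$. Forward complete means every solution is uniquely defined in $X$ on an interval containing $[0,\infty)$ in its interior. *)

theory Defs
  imports "HOL-Analysis.Analysis"
begin

definition loc_lipschitz_on :: "('a::metric_space) set \<Rightarrow> ('a \<Rightarrow> 'b::metric_space) \<Rightarrow> bool" where
  "loc_lipschitz_on X f \<longleftrightarrow>
     (\<forall>x\<in>X. \<exists>e>0. \<exists>L. L-lipschitz_on (cball x e \<inter> X) f)"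

definition is_solution :: "('a::real_normed_vector) set \<Rightarrow> ('a \<Rightarrow> 'a) \<Rightarrow> (real \<Rightarrow> 'a) \<Rightarrow> real set \<Rightarrow> bool" where
  "is_solution X f x I \<longleftrightarrow> is_interval I \<and> open I \<and> 0 \<in> I \<and>
     (\<forall>t\<in>I. x t \<in> X \<and> (x has_vector_derivative f (x t)) (at t))"

definition flow_defined :: "('a::real_normed_vector) set \<Rightarrow> ('a \<Rightarrow> 'a) \<Rightarrow> real \<Rightarrow> 'a \<Rightarrow> bool" where
  "flow_defined X f t xi \<longleftrightarrow> (\<exists>x I. is_solution X f x I \<and> x 0 = xi \<and> t \<in> I)"

definition flow :: "('a::real_normed_vector) set \<Rightarrow> ('a \<Rightarrow> 'a) \<Rightarrow> real \<Rightarrow> 'a \<Rightarrow> 'a" where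
  "flow X f t xi = (THE y. \<exists>x I. is_solution X f x I \<and> x 0 = xi \<and> t \<in> I \<and> x t = y)"

definition forward_complete :: "('a::real_normed_vector) set \<Rightarrow> ('a \<Rightarrow> 'a) \<Rightarrow> bool" where
  "forward_complete X f \<longleftrightarrow>
     (\<forall>xi\<in>X. \<exists>x I. is_solution X f x I \<and> x 0 = xi \<and> {0..} \<subseteq> I) \<and>
     (\<forall>x I y J. is_solution X f x I \<longrightarrow> is_solution X f y J \<longrightarrow> x 0 = y 0 \<longrightarrow>
        (\<forall>t\<in>I \<inter> J. x t = y t))"

definition is_cone :: "('a::real_vector) set \<Rightarrow> bool" where
  "is_cone K \<longleftrightarrow> (\<forall>a\<in>K. \<forall>b\<in>K. a + b \<in> K) \<and> (\<forall>a\<in>K. \<forall>\<alpha>::real. \<alpha> \<ge> 0 \<longrightarrow> \<alpha> *\<^sub>R a \<in> K)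
     \<and> K \<inter> uminus ` K = {0}"

definition Vfun :: "('a::real_vector) set \<Rightarrow> 'a \<Rightarrow> 'a \<Rightarrow> real" where
  "Vfun K v x = Inf {\<alpha>::real. \<alpha> *\<^sub>R v - x \<in> K}"

end

theory Submission
  imports Defs
begin

lemma flow_eq:
  assumes fc: "forward_complete X f" and sol: "is_solution X f x I" and t: "t \<in> I"
  shows "flow_defined X f t (x 0) \<and> flow X f t (x 0) = x t"
proof -
  have ex: "\<exists>x' I'. is_solution X f x' I' \<and> x' 0 = x 0 \<and> t \<in> I' \<and> x' t = x t"
    using sol t by blast
  have un: "y = x t" if "\<exists>x' I'. is_solution X f x' I' \<and> x' 0 = x 0 \<and> t \<in> I' \<and> x' t = y" for y
  proof -
    from that obtain x' I' where h: "is_solution X f x' I'" "x' 0 = x 0" "t \<in> I'" "x' t = y" by blast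
    with fc sol t show ?thesis unfolding forward_complete_def by (metis IntI)
  qed
  have "flow X f t (x 0) = x t"
    unfolding flow_def using ex un by (rule the_equality)
  then show ?thesis using ex unfolding flow_defined_def by blast
qed

lemma shift_solution:
  assumes sol: "is_solution X f x I" and t: "t \<in> I"
  shows "is_solution X f (\<lambda>s. x (s + t)) ((+) (-t) ` I)"
proof -
  have "is_interval I" "open I" "0 \<in> I" and d: "\<forall>s\<in>I. x s \<in> X \<and> (x has_vector_derivative f (x s)) (at s)"
    using sol unfolding is_solution_def by auto
  moreover have "open ((+) (-t) ` I)" using open_translation[OF \<open>open I\<close>, of "-t"] by simp
  moreover have "0 \<in> (+) (-t) ` I" using t by force
  moreover have "\<forall>s\<in>(+) (-t) ` I. x (s + t) \<in> X \<and> ((\<lambda>s. x (s + t)) has_vector_derivative f (x (s + t))) (at s)"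
  proof
    fix s assume "s \<in> (+) (-t) ` I"
    then have st: "s + t \<in> I" by auto
    have d1: "((\<lambda>s. s + t) has_vector_derivative 1) (at s)"
      by (auto intro!: derivative_eq_intros simp: has_real_derivative_iff_has_vector_derivative[symmetric])
    have "(x \<circ> (\<lambda>s. s + t) has_vector_derivative (1::real) *\<^sub>R f (x (s + t))) (at s)"
      by (rule vector_diff_chain_at[OF d1]) (use d st in auto)
    then show "x (s + t) \<in> X \<and> ((\<lambda>s. x (s + t)) has_vector_derivative f (x (s + t))) (at s)"
      using d st by (simp add: o_def)
  qed
  ultimately show ?thesis unfolding is_solution_def by simp
qed

lemma back_flow:
  assumes fc: "forward_complete X f" and xi: "xi \<in> X" and t: "t > 0"
  shows "flow X f t xi \<in> X \<and> flow_defined X f (-t) (flow X f t xi) \<and> flow X f (-t) (flow X f t xi) = xi"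
proof -
  obtain x I where sol: "is_solution X f x I" and x0: "x 0 = xi" and sub: "{0..} \<subseteq> I"
    using fc xi unfolding forward_complete_def by blast
  have tI: "t \<in> I" using sub t by auto
  have fl: "flow X f t xi = x t" using flow_eq[OF fc sol tI] x0 by simp
  have s2: "is_solution X f (\<lambda>s. x (s + t)) ((+) (-t) ` I)" by (rule shift_solution[OF sol tI])
  have m: "-t \<in> (+) (-t) ` I" using sol unfolding is_solution_def by force
  have "flow_defined X f (-t) (x t) \<and> flow X f (-t) (x t) = x 0"
    using flow_eq[OF fc s2 m] by simp
  moreover have "x t \<in> X" using sol tI unfolding is_solution_def by auto
  ultimately show ?thesis using fl x0 by simp
qed


lemma cone_exists_above:
  fixes K :: "'a::real_normed_vector set"
  assumes K_cone: "is_cone K" and v_int: "v \<in> interior K"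
  shows "\<exists>a. a *\<^sub>R v - x \<in> K"
proof -
  obtain r where r: "r > 0" "ball v r \<subseteq> K" using v_int by (meson mem_interior)
  define a where "a = norm x / r + 1"
  have a: "a > 0" unfolding a_def using r by (simp add: add_nonneg_pos)
  have "norm x < a * r" unfolding a_def using r by (simp add: distrib_right)
  then have "norm ((1/a) *\<^sub>R x) < r" using a by (simp add: field_simps)
  then have "v - (1/a) *\<^sub>R x \<in> K" using r by (auto simp: dist_norm)
  then have "a *\<^sub>R (v - (1/a) *\<^sub>R x) \<in> K" using K_cone a unfolding is_cone_def by simp
  then show ?thesis using a by (auto simp: algebra_simps)
qed

lemma V_props:
  fixes K :: "'a::real_normed_vector set"
  assumes K_cone: "is_cone K" and K_closed: "closed K" and v_int: "v \<in> interior K" and v0: "v \<noteq> 0"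
  shows "Vfun K v x *\<^sub>R v - x \<in> K" and "a *\<^sub>R v - x \<in> K \<Longrightarrow> Vfun K v x \<le> a"
proof -
  let ?S = "{\<alpha>::real. \<alpha> *\<^sub>R v - x \<in> K}"
  obtain M where M: "M *\<^sub>R v - (-x) \<in> K" using cone_exists_above[OF K_cone v_int] by blast
  have vK: "v \<in> K" using v_int interior_subset by blast
  have bdd: "bdd_below ?S"
  proof (rule bdd_belowI[where m="-M"])
    fix a assume "a \<in> ?S"
    then have "(a *\<^sub>R v - x) + (M *\<^sub>R v - (-x)) \<in> K" using M K_cone unfolding is_cone_def by blast
    then have aM: "(a + M) *\<^sub>R v \<in> K" by (simp add: algebra_simps)
    show "-M \<le> a"
    proof (rule ccontr)
      assume "\<not> -M \<le> a"
      then have neg: "-(1/(a+M)) \<ge> 0" by (simp add: field_simps)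
      have "(-(1/(a+M))) *\<^sub>R ((a + M) *\<^sub>R v) \<in> K" using K_cone aM neg unfolding is_cone_def by blast
      then have "-v \<in> K" using \<open>\<not> -M \<le> a\<close> by simp
      then have "v \<in> K \<inter> uminus ` K" using vK by (metis IntI image_eqI minus_minus)
      then show False using K_cone v0 unfolding is_cone_def by blast
    qed
  qed
  have ne: "?S \<noteq> {}" using cone_exists_above[OF K_cone v_int] by blast
  have cl: "closed ?S"
  proof -
    have "?S = (\<lambda>\<alpha>. \<alpha> *\<^sub>R v - x) -` K" by auto
    moreover have "closed ((\<lambda>\<alpha>::real. \<alpha> *\<^sub>R v - x) -` K)"
      by (rule continuous_closed_vimage[OF K_closed]) (auto intro!: continuous_intros)
    ultimately show ?thesis by simp
  qed
  show "Vfun K v x *\<^sub>R v - x \<in> K"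
    using closed_contains_Inf[OF ne bdd cl] unfolding Vfun_def by simp
  show "a *\<^sub>R v - x \<in> K \<Longrightarrow> Vfun K v x \<le> a"
    unfolding Vfun_def by (rule cInf_lower[OF _ bdd]) simp
qed

theorem corollary1:
  fixes X K :: "(real ^ 'n) set" and f :: "real ^ 'n \<Rightarrow> real ^ 'n" and v :: "real ^ 'n"
  assumes X_closed: "closed X" and X_reg: "X = closure (interior X)"
    and f_lip: "loc_lipschitz_on X f"
    and fc: "forward_complete X f"
    and K_cone: "is_cone K" and K_closed: "closed K" and K_convex: "convex K"
    and K_int: "interior K \<noteq> {}"
    and mono: "\<forall>\<xi>1\<in>X. \<forall>\<xi>2\<in>X. \<forall>t<0. flow_defined X f t \<xi>1 \<and> flow_defined X f t \<xi>2 \<and>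
                 \<xi>1 - \<xi>2 \<in> K \<and> \<xi>1 \<noteq> \<xi>2 \<longrightarrow> flow X f t \<xi>1 - flow X f t \<xi>2 \<in> interior K"
    and v_int: "v \<in> interior K" and v_norm: "norm v = 1"
    and X_trans: "\<forall>\<xi>\<in>X. \<forall>c::real. \<xi> + c *\<^sub>R v \<in> X"
    and flow_trans: "\<forall>\<xi>\<in>X. \<forall>c::real. \<forall>t. flow_defined X f t \<xi> \<longrightarrow>
                 flow_defined X f t (\<xi> + c *\<^sub>R v) \<and>
                 flow X f t (\<xi> + c *\<^sub>R v) = flow X f t \<xi> + c *\<^sub>R v"
  shows "\<forall>\<xi>1\<in>X. \<forall>\<xi>2\<in>X. \<forall>t>0.
           Vfun K v (flow X f t \<xi>1 - flow X f t \<xi>2) \<ge> Vfun K v (\<xi>1 - \<xi>2) \<and>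
           (\<xi>1 - \<xi>2 \<notin> span {v} \<longrightarrow>
              Vfun K v (flow X f t \<xi>1 - flow X f t \<xi>2) > Vfun K v (\<xi>1 - \<xi>2))"
proof (intro ballI allI impI)
  fix \<xi>1 \<xi>2 :: "real ^ 'n" and t :: real
  assume x1: "\<xi>1 \<in> X" and x2: "\<xi>2 \<in> X" and t: "t > 0"
  have v0: "v \<noteq> 0" using v_norm by auto
  define y1 where "y1 = flow X f t \<xi>1"
  define y2 where "y2 = flow X f t \<xi>2"
  define a where "a = Vfun K v (y1 - y2)"
  have y1: "y1 \<in> X" "flow_defined X f (-t) y1" "flow X f (-t) y1 = \<xi>1"
    using back_flow[OF fc x1 t] unfolding y1_def by auto
  have y2: "y2 \<in> X" "flow_defined X f (-t) y2" "flow X f (-t) y2 = \<xi>2"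
    using back_flow[OF fc x2 t] unfolding y2_def by auto
  have aK: "(y2 + a *\<^sub>R v) - y1 \<in> K"
    using V_props(1)[OF K_cone K_closed v_int v0, of "y1 - y2"] unfolding a_def by (simp add: algebra_simps)
  have y2a: "y2 + a *\<^sub>R v \<in> X" "flow_defined X f (-t) (y2 + a *\<^sub>R v)"
     "flow X f (-t) (y2 + a *\<^sub>R v) = \<xi>2 + a *\<^sub>R v"
    using X_trans flow_trans y2 by auto
  have "a *\<^sub>R v - (\<xi>1 - \<xi>2) \<in> K \<and> (\<xi>1 - \<xi>2 \<notin> span {v} \<longrightarrow> a *\<^sub>R v - (\<xi>1 - \<xi>2) \<in> interior K)"
  proof (cases "y2 + a *\<^sub>R v = y1")
    case True
    then have "\<xi>1 = \<xi>2 + a *\<^sub>R v" using y1 y2a by simp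
    moreover have "0 \<in> K" using K_cone aK unfolding is_cone_def by (metis scale_zero_left order_refl)
    ultimately show ?thesis by (simp add: span_base span_scale)
  next
    case False
    have "-t < 0" using t by simp
    then have "flow X f (-t) (y2 + a *\<^sub>R v) - flow X f (-t) y1 \<in> interior K"
      using mono y2a y1 aK False by blast
    then have "a *\<^sub>R v - (\<xi>1 - \<xi>2) \<in> interior K" using y2a y1 by (simp add: algebra_simps)
    then show ?thesis using interior_subset by blast
  qed
  then have le: "Vfun K v (\<xi>1 - \<xi>2) \<le> a" and
    int: "\<xi>1 - \<xi>2 \<notin> span {v} \<Longrightarrow> a *\<^sub>R v - (\<xi>1 - \<xi>2) \<in> interior K"
    using V_props(2)[OF K_cone K_closed v_int v0] by auto
  have lt: "Vfun K v (\<xi>1 - \<xi>2) < a" if ns: "\<xi>1 - \<xi>2 \<notin> span {v}"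
  proof -
    have "open (interior K)" by simp
    then obtain e where e: "e > 0" "ball (a *\<^sub>R v - (\<xi>1 - \<xi>2)) e \<subseteq> interior K"
      using int[OF ns] openE by blast
    have "dist (a *\<^sub>R v - (\<xi>1 - \<xi>2)) ((a - e/2) *\<^sub>R v - (\<xi>1 - \<xi>2)) < e"
      using e v_norm by (simp add: dist_norm algebra_simps)
    then have "(a - e/2) *\<^sub>R v - (\<xi>1 - \<xi>2) \<in> interior K" using e by (auto simp: dist_commute)
    then have "(a - e/2) *\<^sub>R v - (\<xi>1 - \<xi>2) \<in> K" using interior_subset by blast
    then have "Vfun K v (\<xi>1 - \<xi>2) \<le> a - e/2" using V_props(2)[OF K_cone K_closed v_int v0] by blast
    then show ?thesis using e by simp
  qed
  show "Vfun K v (flow X f t \<xi>1 - flow X f t \<xi>2) \<ge> Vfun K v (\<xi>1 - \<xi>2) \<and>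
           (\<xi>1 - \<xi>2 \<notin> span {v} \<longrightarrow>
              Vfun K v (flow X f t \<xi>1 - flow X f t \<xi>2) > Vfun K v (\<xi>1 - \<xi>2))"
    using le lt unfolding a_def y1_def y2_def by blast
qed

end
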